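(* Let $\boldsymbol{\psi}=(\psi_k)_{k\in\mathbb{K}}$ be a regularization of $\psi:\mathcal{M}\to\Theta$ which is continuous at the data-generating distribution $P\in\mathcal{M}$ with respect to a distance $d$, with moduli $(\delta_k)_{k\in\mathbb{K}}$, and let $(r_n)$ be a real-valued positive diverging sequence with $d(P_n,P)=o_P(r_n^{-1})$. Suppose $k\mapsto\|\psi_k(P)-\psi(P)\|_\Theta$ is continuous and non-increasing and, for each $n$, $k\mapsto\delta_k(r_n^{-1})$ is continuous and non-decreasing. For each $n$ let $\mathcal{G}_n$ be a finite subset of $\mathbb{K}$, let $$\mathcal{L}_n=\{k\in\mathcal{G}_n:\ \|\psi_k(P_n)-\psi_{k'}(P_n)\|_\Theta\le4\delta_{k'}(r_n^{-1})\ \forall k'\ge k,\ k'\in\mathcal{G}_n\}$$ and $\tilde k_n(r_n)=\min\mathcal{L}_n$. Then $$\|\psi_{\tilde k_n(r_n)}(P_n)-\psi(P)\|_\Theta=O_P\left(\inf_{k\in\mathcal{G}_n}\{\delta_k(r_n^{-1})+\|\psi_k(P)-\psi(P)\|_\Theta\}\right).$$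
   Context: Setting: $\mathbb{Z}\subseteq\mathbb{R}^d$; data IID with law $P$; $\mathbf{P}$ the product probability on $\mathbb{Z}^\infty$ (to which $o_P,O_P$ refer); $ca(\mathbb{Z})$ signed Borel measures of finite variation; $\mathcal{D}$ discretely supported probability measures; $P_n$ the empirical distribution. $\mathcal{M}$ a set of Borel probability measures, $(\Theta,\|\cdot\|_\Theta)$ a normed space, $\mathbb{K}\subseteq\mathbb{R}_+$ unbounded above. A regularization is a family $(\psi_k)_{k\in\mathbb{K}}$, $\psi_k:\mathbb{D}_\psi\subseteq ca(\mathbb{Z})\to\Theta$, $\mathbb{D}_\psi\supseteq\mathcal{M}\cup\mathcal{D}$, with $\|\psi_k(Q)-\psi(Q)\|_\Theta\to0$ for all $Q\in\mathcal{M}$. A modulus of continuity is a continuous non-decreasing $f:\mathbb{R}_+\to\mathbb{R}_+$ with $f(t)=0$ iff $t=0$; continuity at $P$ w.r.t. $d$ means moduli $(\delta_k)$ with $\|\psi_k(P')-\psi_k(P)\|_\Theta\le\delta_k(d(P',P))$ for all $k$ and $P'\in\mathbb{D}_\psi$. *)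

theory Defs
  imports "HOL-Probability.Probability"
begin

abbreviation borelZ :: "'a::euclidean_space set \<Rightarrow> 'a measure" where
  "borelZ Z \<equiv> restrict_space borel Z"

text \<open>Signed measures are represented as real-valued set functions on the
Borel sets of Z (zero outside the sigma-algebra).  ca Z is the set of countably
additive set functions of finite variation.\<close>
definition ca :: "'a::euclidean_space set \<Rightarrow> ('a set \<Rightarrow> real) set" where
  "ca Z = {\<mu>. (\<forall>A. A \<notin> sets (borelZ Z) \<longrightarrow> \<mu> A = 0) \<and> \<mu> {} = 0 \<and>
     (\<forall>F::nat \<Rightarrow> 'a set. range F \<subseteq> sets (borelZ Z) \<longrightarrow> disjoint_family F \<longrightarrow>
        (\<lambda>i. \<mu> (F i)) sums \<mu> (\<Union>i. F i)) \<and>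
     (\<exists>B. \<forall>(F::nat \<Rightarrow> 'a set) n. range F \<subseteq> sets (borelZ Z) \<longrightarrow> disjoint_family F \<longrightarrow>
        (\<Sum>i<n. \<bar>\<mu> (F i)\<bar>) \<le> B)}"

definition setfun :: "'a measure \<Rightarrow> ('a set \<Rightarrow> real)" where
  "setfun Q = measure Q"

definition discrete_probs :: "'a::euclidean_space set \<Rightarrow> ('a set \<Rightarrow> real) set" where
  "discrete_probs Z = {\<mu>. \<exists>S w. countable S \<and> S \<subseteq> Z \<and> (\<forall>x\<in>S. w x > (0::real)) \<and>
     (w has_sum 1) S \<and>
     \<mu> = (\<lambda>A. if A \<in> sets (borelZ Z) then infsum w (S \<inter> A) else 0)}"

definition empirical :: "'a::euclidean_space set \<Rightarrow> (nat \<Rightarrow> 'a) \<Rightarrow> nat \<Rightarrow> ('a set \<Rightarrow> real)" where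
  "empirical Z \<omega> n = (\<lambda>A. if A \<in> sets (borelZ Z)
      then real (card {i. i < n \<and> \<omega> i \<in> A}) / real n else 0)"

definition modulus :: "(real \<Rightarrow> real) \<Rightarrow> bool" where
  "modulus f \<longleftrightarrow> continuous_on {0..} f \<and> mono_on {0..} f \<and> (\<forall>t\<ge>0. f t \<ge> 0) \<and>
     (\<forall>t\<ge>0. f t = 0 \<longleftrightarrow> t = 0)"

text \<open>Outer probability (so that o_P / O_P make sense without measurability).\<close>
definition outer_prob :: "'b measure \<Rightarrow> 'b set \<Rightarrow> real" where
  "outer_prob M A = Inf {measure M B | B. B \<in> sets M \<and> A \<subseteq> B}"

definition small_oP :: "'b measure \<Rightarrow> (nat \<Rightarrow> 'b \<Rightarrow> real) \<Rightarrow> (nat \<Rightarrow> real) \<Rightarrow> bool" where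
  "small_oP M X a \<longleftrightarrow> (\<forall>\<epsilon>>0. \<forall>\<eta>>0. \<exists>N. \<forall>n\<ge>N.
      outer_prob M {\<omega>\<in>space M. \<bar>X n \<omega>\<bar> > \<epsilon> * a n} < \<eta>)"

definition big_OP :: "'b measure \<Rightarrow> (nat \<Rightarrow> 'b \<Rightarrow> real) \<Rightarrow> (nat \<Rightarrow> real) \<Rightarrow> bool" where
  "big_OP M X a \<longleftrightarrow> (\<forall>\<eta>>0. \<exists>C. \<exists>N. \<forall>n\<ge>N.
      outer_prob M {\<omega>\<in>space M. \<bar>X n \<omega>\<bar> > C * a n} < \<eta>)"

definition Lset :: "real set \<Rightarrow> (real \<Rightarrow> 'm \<Rightarrow> 't::real_normed_vector) \<Rightarrow>
    (real \<Rightarrow> real \<Rightarrow> real) \<Rightarrow> real \<Rightarrow> 'm \<Rightarrow> real set" where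
  "Lset G \<psi> \<delta> r Q = {k\<in>G. \<forall>k'\<in>G. k' \<ge> k \<longrightarrow>
      norm (\<psi> k Q - \<psi> k' Q) \<le> 4 * \<delta> k' (inverse r)}"

definition ktilde :: "real set \<Rightarrow> (real \<Rightarrow> 'm \<Rightarrow> 't::real_normed_vector) \<Rightarrow>
    (real \<Rightarrow> real \<Rightarrow> real) \<Rightarrow> real \<Rightarrow> 'm \<Rightarrow> real" where
  "ktilde G \<psi> \<delta> r Q = Min (Lset G \<psi> \<delta> r Q)"

end

theory Submission
  imports Defs
begin

lemma tri3: "norm (a - (d::'t::real_normed_vector)) \<le> norm (a - b) + norm (b - c) + norm (c - d)"
proof -
  have "norm (a - d) \<le> norm (a - c) + norm (c - d)" by (rule norm_diff_triangle_le) (rule order_refl)+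
  moreover have "norm (a - c) \<le> norm (a - b) + norm (b - c)" by (rule norm_diff_triangle_le) (rule order_refl)+
  ultimately show ?thesis by linarith
qed

lemma tri4: "norm (a - (e::'t::real_normed_vector)) \<le> norm (a - b) + norm (b - c) + norm (c - d) + norm (d - e)"
proof -
  have "norm (a - e) \<le> norm (a - d) + norm (d - e)" by (rule norm_diff_triangle_le) (rule order_refl)+
  moreover have "norm (a - d) \<le> norm (a - b) + norm (b - c) + norm (c - d)" by (rule tri3)
  ultimately show ?thesis by linarith
qed

lemma core:
  fixes e p :: "real \<Rightarrow> 't::real_normed_vector" and t :: 't and dl :: "real \<Rightarrow> real"
  assumes fin: "finite G" and ks: "ks \<in> G"
   and close: "\<forall>k\<in>G. norm (e k - p k) \<le> dl k"
   and dmono: "\<forall>k\<in>G. \<forall>k'\<in>G. k \<le> k' \<longrightarrow> dl k \<le> dl k'"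
   and bmono: "\<forall>k\<in>G. \<forall>k'\<in>G. k \<le> k' \<longrightarrow> norm (p k' - t) \<le> norm (p k - t)"
   and L: "L = {k\<in>G. \<forall>k'\<in>G. k' \<ge> k \<longrightarrow> norm (e k - e k') \<le> 4 * dl k'}"
  shows "norm (e (Min L) - t) \<le> 5 * (dl ks + norm (p ks - t))"
proof -
  define b where "b k = norm (p k - t)" for k
  have dl0: "dl k \<ge> 0" if "k \<in> G" for k using close that by (meson norm_ge_zero order_trans)
  define S where "S = {k\<in>G. k \<ge> ks \<and> (k = ks \<or> dl k \<le> b ks)}"
  have finS: "finite S" using fin unfolding S_def by simp
  have ksS: "ks \<in> S" using ks unfolding S_def by simp
  define m where "m = Max S"
  have mS: "m \<in> S" unfolding m_def using finS ksS Max_in by blast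
  have mG: "m \<in> G" and mks: "m \<ge> ks" using mS unfolding S_def by auto
  have mL: "m \<in> L"
    unfolding L
  proof (intro CollectI conjI ballI impI)
    show "m \<in> G" by (rule mG)
    fix k' assume k'G: "k' \<in> G" and mk': "m \<le> k'"
    show "norm (e m - e k') \<le> 4 * dl k'"
    proof (cases "k' = m")
      case True then show ?thesis using dl0[OF mG] by simp
    next
      case False
      then have "k' > m" using mk' by simp
      then have "k' \<notin> S" using finS Max_ge m_def by fastforce
      then have big: "dl k' > b ks" using k'G mks mk' \<open>k' > m\<close> unfolding S_def by auto
      have bm: "b m \<le> b ks" using bmono ks mG mks unfolding b_def by blast
      have bk': "b k' \<le> b m" using bmono k'G mG mk' unfolding b_def by blast
      have dm: "dl m \<le> dl k'" using dmono mG k'G mk' by blast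
      have "norm (e m - e k') \<le> norm (e m - p m) + norm (p m - t) + norm (t - p k') + norm (p k' - e k')"
        by (rule tri4)
      also have "\<dots> \<le> dl m + b m + b k' + dl k'"
        using close mG k'G unfolding b_def by (simp add: add_mono norm_minus_commute)
      also have "\<dots> \<le> 4 * dl k'" using big bm bk' dm by linarith
      finally show ?thesis .
    qed
  qed
  have finL: "finite L" using fin unfolding L by simp
  define kt where "kt = Min L"
  have ktL: "kt \<in> L" unfolding kt_def using finL mL Min_in by blast
  have ktm: "kt \<le> m" unfolding kt_def using finL mL by simp
  have ktG: "kt \<in> G" using ktL unfolding L by simp
  show ?thesis
  proof (cases "kt \<le> ks")
    case True
    have "norm (e kt - e ks) \<le> 4 * dl ks" using ktL ks True unfolding L by simp
    moreover have "norm (e ks - p ks) \<le> dl ks" using close ks by simp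
    moreover have "norm (e kt - t) \<le> norm (e kt - e ks) + norm (e ks - p ks) + norm (p ks - t)" by (rule tri3)
    moreover have "b ks \<ge> 0" unfolding b_def by simp
    ultimately show ?thesis unfolding kt_def[symmetric] b_def by (smt (verit))
  next
    case False
    then have "m \<noteq> ks" using ktm by simp
    then have dm: "dl m \<le> b ks" using mS unfolding S_def by simp
    have "dl kt \<le> dl m" using dmono ktG mG ktm by blast
    moreover have "b kt \<le> b ks" using bmono ks ktG False unfolding b_def by simp
    moreover have "norm (e kt - t) \<le> norm (e kt - p kt) + norm (p kt - t)" using norm_triangle_ineq[of "e kt - p kt" "p kt - t"] by simp
    moreover have "norm (e kt - p kt) \<le> dl kt" using close ktG by simp
    moreover have "dl ks \<ge> 0" using dl0 ks by simp
    ultimately show ?thesis using dm norm_ge_zero[of "p ks - t"] unfolding kt_def[symmetric] b_def by (smt (verit))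
  qed
qed

lemma outer_prob_mono:
  assumes "A \<subseteq> B" "B \<subseteq> space M"
  shows "outer_prob M A \<le> outer_prob M B"
  unfolding outer_prob_def
proof (rule cInf_superset_mono)
  show "{measure M C |C. C \<in> sets M \<and> B \<subseteq> C} \<noteq> {}" using assms by blast
  show "bdd_below {measure M C |C. C \<in> sets M \<and> A \<subseteq> C}"
    by (rule bdd_belowI[of _ 0]) auto
  show "{measure M C |C. C \<in> sets M \<and> B \<subseteq> C} \<subseteq> {measure M C |C. C \<in> sets M \<and> A \<subseteq> C}"
    using assms by blast
qed

lemma emp_discrete:
  assumes n: "n \<ge> 1" and om: "\<forall>i. \<omega> i \<in> Z"
  shows "empirical Z \<omega> n \<in> discrete_probs Z"
proof -
  define S where "S = \<omega> ` {..<n}"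
  define w where "w x = real (card {i. i < n \<and> \<omega> i = x}) / real n" for x
  have finS: "finite S" unfolding S_def by simp
  have cnt: "real (card {i. i < n \<and> \<omega> i \<in> A}) = (\<Sum>x\<in>S \<inter> A. real (card {i. i < n \<and> \<omega> i = x}))" for A
  proof -
    have f: "finite {i. i < n \<and> \<omega> i \<in> A}" by simp
    have "card {i. i < n \<and> \<omega> i \<in> A} = (\<Sum>i\<in>{i. i < n \<and> \<omega> i \<in> A}. 1)" by simp
    also have "\<dots> = (\<Sum>y\<in>\<omega> ` {i. i < n \<and> \<omega> i \<in> A}. \<Sum>x\<in>{x. x \<in> {i. i < n \<and> \<omega> i \<in> A} \<and> \<omega> x = y}. (1::nat))"
      by (rule sum.image_gen[OF f])
    also have "\<omega> ` {i. i < n \<and> \<omega> i \<in> A} = S \<inter> A" unfolding S_def by auto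
    also have "(\<Sum>y\<in>S \<inter> A. \<Sum>x\<in>{x. x \<in> {i. i < n \<and> \<omega> i \<in> A} \<and> \<omega> x = y}. (1::nat))
        = (\<Sum>y\<in>S \<inter> A. card {i. i < n \<and> \<omega> i = y})"
    proof (rule sum.cong)
      fix y assume "y \<in> S \<inter> A"
      then have "{x. x \<in> {i. i < n \<and> \<omega> i \<in> A} \<and> \<omega> x = y} = {i. i < n \<and> \<omega> i = y}" by auto
      then show "(\<Sum>x\<in>{x. x \<in> {i. i < n \<and> \<omega> i \<in> A} \<and> \<omega> x = y}. (1::nat)) = card {i. i < n \<and> \<omega> i = y}"
        by simp
    qed simp
    finally show ?thesis by (simp add: of_nat_sum)
  qed
  have sumw: "infsum w (S \<inter> A) = real (card {i. i < n \<and> \<omega> i \<in> A}) / real n" for A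
    using finS cnt[of A] unfolding w_def by (simp add: sum_divide_distrib)
  have "real (card {i. i < n \<and> \<omega> i \<in> UNIV}) = real n" by simp
  then have s1: "sum w S = 1" using sumw[of UNIV] finS n by simp
  show ?thesis
    unfolding discrete_probs_def
  proof (intro CollectI exI conjI)
    show "countable S" using finS by (rule countable_finite)
    show "S \<subseteq> Z" using om unfolding S_def by auto
    show "\<forall>x\<in>S. 0 < w x"
    proof
      fix x assume "x \<in> S"
      then obtain i where "i < n" "\<omega> i = x" unfolding S_def by auto
      then have "card {i. i < n \<and> \<omega> i = x} > 0" by (subst card_gt_0_iff) auto
      then show "0 < w x" unfolding w_def using n by simp
    qed
    show "(w has_sum 1) S" using finS s1 by (metis has_sum_finite)
    show "empirical Z \<omega> n = (\<lambda>A. if A \<in> sets (borelZ Z) then infsum w (S \<inter> A) else 0)"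
      unfolding empirical_def using sumw by auto
  qed
qed

theorem corollary1:
  fixes Z :: "'a::euclidean_space set"
    and Ms :: "'a measure set"
    and K :: "real set"
    and \<psi> :: "real \<Rightarrow> ('a set \<Rightarrow> real) \<Rightarrow> 't::real_normed_vector"
    and \<psi>0 :: "'a measure \<Rightarrow> 't"
    and D\<psi> :: "('a set \<Rightarrow> real) set"
    and d :: "('a set \<Rightarrow> real) \<Rightarrow> ('a set \<Rightarrow> real) \<Rightarrow> real"
    and \<delta> :: "real \<Rightarrow> real \<Rightarrow> real"
    and P :: "'a measure"
    and r :: "nat \<Rightarrow> real"
    and G :: "nat \<Rightarrow> real set"
  assumes Ms: "\<forall>Q\<in>Ms. prob_space Q \<and> sets Q = sets (borelZ Z)"
    and K: "K \<subseteq> {0..}" "\<forall>b. \<exists>k\<in>K. k > b"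
    and Dpsi: "setfun ` Ms \<union> discrete_probs Z \<subseteq> D\<psi>" "D\<psi> \<subseteq> ca Z"
    and reg: "\<forall>Q\<in>Ms. \<forall>\<epsilon>>0. \<exists>k0. \<forall>k\<in>K. k \<ge> k0 \<longrightarrow> norm (\<psi> k (setfun Q) - \<psi>0 Q) < \<epsilon>"
    and d_nonneg: "\<forall>x y. d x y \<ge> 0"
    and P: "P \<in> Ms"
    and cont: "\<forall>k\<in>K. modulus (\<delta> k) \<and>
        (\<forall>P'\<in>D\<psi>. norm (\<psi> k P' - \<psi> k (setfun P)) \<le> \<delta> k (d P' (setfun P)))"
    and r_pos: "\<forall>n. r n > 0"
    and r_div: "filterlim r at_top sequentially"
    and rate: "small_oP (Pi\<^sub>M UNIV (\<lambda>_::nat. P))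
        (\<lambda>n \<omega>. d (empirical Z \<omega> n) (setfun P)) (\<lambda>n. inverse (r n))"
    and bias_cont: "continuous_on K (\<lambda>k. norm (\<psi> k (setfun P) - \<psi>0 P))"
    and bias_mono: "\<forall>k\<in>K. \<forall>k'\<in>K. k \<le> k' \<longrightarrow>
        norm (\<psi> k' (setfun P) - \<psi>0 P) \<le> norm (\<psi> k (setfun P) - \<psi>0 P)"
    and delta_cont: "\<forall>n. continuous_on K (\<lambda>k. \<delta> k (inverse (r n)))"
    and delta_mono: "\<forall>n. \<forall>k\<in>K. \<forall>k'\<in>K. k \<le> k' \<longrightarrow> \<delta> k (inverse (r n)) \<le> \<delta> k' (inverse (r n))"
    and G: "\<forall>n. finite (G n) \<and> G n \<noteq> {} \<and> G n \<subseteq> K"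
  shows "big_OP (Pi\<^sub>M UNIV (\<lambda>_::nat. P))
    (\<lambda>n \<omega>. norm (\<psi> (ktilde (G n) \<psi> \<delta> (r n) (empirical Z \<omega> n)) (empirical Z \<omega> n) - \<psi>0 P))
    (\<lambda>n. INF k\<in>G n. \<delta> k (inverse (r n)) + norm (\<psi> k (setfun P) - \<psi>0 P))"
proof -
  let ?M = "Pi\<^sub>M UNIV (\<lambda>_::nat. P)"
  have sP: "sets P = sets (borelZ Z)" using Ms P by blast
  have spP: "space P = Z"
    using sets_eq_imp_space_eq[OF sP] by (simp add: space_restrict_space)
  have omZ: "\<forall>i. \<omega> i \<in> Z" if "\<omega> \<in> space ?M" for \<omega>
    using that by (auto simp: space_PiM spP)
  have key: "norm (\<psi> (ktilde (G n) \<psi> \<delta> (r n) (empirical Z \<omega> n)) (empirical Z \<omega> n) - \<psi>0 P)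
      \<le> 5 * (INF k\<in>G n. \<delta> k (inverse (r n)) + norm (\<psi> k (setfun P) - \<psi>0 P))"
    if n1: "n \<ge> 1" and om: "\<omega> \<in> space ?M" and dle: "d (empirical Z \<omega> n) (setfun P) \<le> inverse (r n)" for n \<omega>
  proof -
    let ?Pn = "empirical Z \<omega> n"
    have PnD: "?Pn \<in> D\<psi>" using emp_discrete[OF n1 omZ[OF om]] Dpsi(1) by blast
    define f where "f k = \<delta> k (inverse (r n)) + norm (\<psi> k (setfun P) - \<psi>0 P)" for k
    have Gn: "finite (G n)" "G n \<noteq> {}" "G n \<subseteq> K" using G by auto
    have "Min (f ` G n) \<in> f ` G n" using Gn by simp
    then obtain ks where ks: "ks \<in> G n" "f ks = Min (f ` G n)" by auto
    have INFeq: "(INF k\<in>G n. f k) = f ks" using ks Gn by (simp add: cInf_eq_Min)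
    have close: "\<forall>k\<in>G n. norm (\<psi> k ?Pn - \<psi> k (setfun P)) \<le> \<delta> k (inverse (r n))"
    proof
      fix k assume "k \<in> G n"
      then have kK: "k \<in> K" using Gn by blast
      have m: "modulus (\<delta> k)" and c: "norm (\<psi> k ?Pn - \<psi> k (setfun P)) \<le> \<delta> k (d ?Pn (setfun P))"
        using cont kK PnD by auto
      have "mono_on {0..} (\<delta> k)" using m unfolding modulus_def by blast
      moreover have "d ?Pn (setfun P) \<in> {0..}" using d_nonneg by simp
      moreover have "inverse (r n) \<in> {0..}" using r_pos[rule_format, of n] by simp
      ultimately have "\<delta> k (d ?Pn (setfun P)) \<le> \<delta> k (inverse (r n))"
        using dle by (rule mono_onD)
      then show "norm (\<psi> k ?Pn - \<psi> k (setfun P)) \<le> \<delta> k (inverse (r n))" using c by linarith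
    qed
    have "norm (\<psi> (Min (Lset (G n) \<psi> \<delta> (r n) ?Pn)) ?Pn - \<psi>0 P)
        \<le> 5 * (\<delta> ks (inverse (r n)) + norm (\<psi> ks (setfun P) - \<psi>0 P))"
      apply (rule core[where e="\<lambda>k. \<psi> k ?Pn" and p="\<lambda>k. \<psi> k (setfun P)" and dl="\<lambda>k. \<delta> k (inverse (r n))" and G="G n"])
      subgoal using Gn by simp
      subgoal using ks by simp
      subgoal using close by simp
      subgoal using delta_mono Gn by blast
      subgoal using bias_mono Gn by blast
      subgoal unfolding Lset_def by simp
      done
    moreover have "(INF k\<in>G n. \<delta> k (inverse (r n)) + norm (\<psi> k (setfun P) - \<psi>0 P))
        = \<delta> ks (inverse (r n)) + norm (\<psi> ks (setfun P) - \<psi>0 P)"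
      using INFeq unfolding f_def .
    ultimately show ?thesis unfolding ktilde_def by simp
  qed
  show ?thesis unfolding big_OP_def
  proof (intro allI impI)
    fix \<eta> :: real assume eta: "\<eta> > 0"
    from rate eta obtain N where N: "\<forall>n\<ge>N. outer_prob ?M {\<omega>\<in>space ?M. \<bar>d (empirical Z \<omega> n) (setfun P)\<bar> > 1 * inverse (r n)} < \<eta>"
      unfolding small_oP_def by (meson zero_less_one)
    show "\<exists>C N. \<forall>n\<ge>N. outer_prob ?M {\<omega>\<in>space ?M. \<bar>norm (\<psi> (ktilde (G n) \<psi> \<delta> (r n) (empirical Z \<omega> n)) (empirical Z \<omega> n) - \<psi>0 P)\<bar>
        > C * (INF k\<in>G n. \<delta> k (inverse (r n)) + norm (\<psi> k (setfun P) - \<psi>0 P))} < \<eta>"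
    proof (intro exI allI impI)
      fix n assume nN: "max N 1 \<le> n"
      have sub: "{\<omega>\<in>space ?M. \<bar>norm (\<psi> (ktilde (G n) \<psi> \<delta> (r n) (empirical Z \<omega> n)) (empirical Z \<omega> n) - \<psi>0 P)\<bar>
        > 5 * (INF k\<in>G n. \<delta> k (inverse (r n)) + norm (\<psi> k (setfun P) - \<psi>0 P))}
        \<subseteq> {\<omega>\<in>space ?M. \<bar>d (empirical Z \<omega> n) (setfun P)\<bar> > 1 * inverse (r n)}"
      proof
        fix \<omega> assume a: "\<omega> \<in> {\<omega>\<in>space ?M. \<bar>norm (\<psi> (ktilde (G n) \<psi> \<delta> (r n) (empirical Z \<omega> n)) (empirical Z \<omega> n) - \<psi>0 P)\<bar>
          > 5 * (INF k\<in>G n. \<delta> k (inverse (r n)) + norm (\<psi> k (setfun P) - \<psi>0 P))}"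
        then have om: "\<omega> \<in> space ?M" by simp
        show "\<omega> \<in> {\<omega>\<in>space ?M. \<bar>d (empirical Z \<omega> n) (setfun P)\<bar> > 1 * inverse (r n)}"
        proof (rule ccontr)
          assume "\<omega> \<notin> {\<omega>\<in>space ?M. \<bar>d (empirical Z \<omega> n) (setfun P)\<bar> > 1 * inverse (r n)}"
          then have "d (empirical Z \<omega> n) (setfun P) \<le> inverse (r n)" using om d_nonneg by auto
          from key[OF _ om this] nN a show False by auto
        qed
      qed
      have "outer_prob ?M {\<omega>\<in>space ?M. \<bar>norm (\<psi> (ktilde (G n) \<psi> \<delta> (r n) (empirical Z \<omega> n)) (empirical Z \<omega> n) - \<psi>0 P)\<bar>
        > 5 * (INF k\<in>G n. \<delta> k (inverse (r n)) + norm (\<psi> k (setfun P) - \<psi>0 P))}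
        \<le> outer_prob ?M {\<omega>\<in>space ?M. \<bar>d (empirical Z \<omega> n) (setfun P)\<bar> > 1 * inverse (r n)}"
        by (rule outer_prob_mono[OF sub]) auto
      also have "\<dots> < \<eta>" using N nN by simp
      finally show "outer_prob ?M {\<omega>\<in>space ?M. \<bar>norm (\<psi> (ktilde (G n) \<psi> \<delta> (r n) (empirical Z \<omega> n)) (empirical Z \<omega> n) - \<psi>0 P)\<bar>
        > 5 * (INF k\<in>G n. \<delta> k (inverse (r n)) + norm (\<psi> k (setfun P) - \<psi>0 P))} < \<eta>" .
    qed
  qed
qed

end
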